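(* For every irrational $\alpha>0$ there is a constant $C=C(\alpha)>0$ such that $\delta_{\min}^{(\alpha)}(N)\le C\,N^{-1/2}$ for all integers $N\ge2$.
   Context: For irrational $\alpha>0$, the numbers $\alpha m^2+n^2$ with integers $m,n\ge 1$ are pairwise distinct; list them in increasing order as $0<\lambda_1<\lambda_2<\cdots$. For $N\ge 2$ define $\delta_{\min}^{(\alpha)}(N)=\min\{\lambda_{i+1}-\lambda_i : 1\le i<N\}$. *)

theory Defs
  imports "HOL-Analysis.Analysis"
begin

definition spec :: "real \<Rightarrow> real set" where
  "spec \<alpha> = {\<alpha> * (real m)^2 + (real n)^2 | m n :: nat. m \<ge> 1 \<and> n \<ge> 1}"

definition lam :: "real \<Rightarrow> nat \<Rightarrow> real" where
  "lam \<alpha> k = (THE x. x \<in> spec \<alpha> \<and> card {y \<in> spec \<alpha>. y < x} = k - 1)"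

definition delta_min :: "real \<Rightarrow> nat \<Rightarrow> real" where
  "delta_min \<alpha> N = Min {lam \<alpha> (i + 1) - lam \<alpha> i | i. 1 \<le> i \<and> i < N}"

end

theory Submission
  imports Defs
begin

lemma spec_intro: "m \<ge> 1 \<Longrightarrow> n \<ge> 1 \<Longrightarrow> \<alpha> * (real m)^2 + (real n)^2 \<in> spec \<alpha>"
  unfolding spec_def by blast

lemma count_below:
  assumes a: "\<alpha> > 0" and y: "y \<ge> 0"
  shows "finite {z \<in> spec \<alpha>. z < y} \<and> real (card {z \<in> spec \<alpha>. z < y}) \<le> y / sqrt \<alpha>"
proof -
  define A where "A = nat \<lfloor>sqrt (y/\<alpha>)\<rfloor>"
  define B where "B = nat \<lfloor>sqrt y\<rfloor>"
  define f where "f = (\<lambda>(m::nat, n::nat). \<alpha> * (real m)^2 + (real n)^2)"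
  have sub: "{z \<in> spec \<alpha>. z < y} \<subseteq> f ` ({1..A} \<times> {1..B})"
  proof
    fix z assume "z \<in> {z \<in> spec \<alpha>. z < y}"
    then obtain m n :: nat where z: "z = \<alpha> * (real m)^2 + (real n)^2" "m \<ge> 1" "n \<ge> 1" "z < y"
      unfolding spec_def by blast
    have "(real n)^2 \<ge> 0" by simp
    hence "\<alpha> * (real m)^2 \<le> y" using z by linarith
    hence "(real m)^2 \<le> y/\<alpha>" using a by (simp add: field_simps)
    hence "real m \<le> sqrt (y/\<alpha>)" by (simp add: real_le_rsqrt)
    hence "int m \<le> \<lfloor>sqrt (y/\<alpha>)\<rfloor>" by (simp add: le_floor_iff)
    hence mA: "m \<le> A" unfolding A_def by simp
    have "\<alpha> * (real m)^2 \<ge> 0" using a by simp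
    hence "(real n)^2 \<le> y" using z by linarith
    hence "real n \<le> sqrt y" by (simp add: real_le_rsqrt)
    hence "int n \<le> \<lfloor>sqrt y\<rfloor>" by (simp add: le_floor_iff)
    hence nB: "n \<le> B" unfolding B_def by simp
    show "z \<in> f ` ({1..A} \<times> {1..B})" using z mA nB unfolding f_def by force
  qed
  have fin: "finite {z \<in> spec \<alpha>. z < y}" by (rule finite_subset[OF sub]) auto
  have "card {z \<in> spec \<alpha>. z < y} \<le> card (f ` ({1..A} \<times> {1..B}))"
    by (rule card_mono[OF _ sub]) auto
  also have "\<dots> \<le> card ({1..A} \<times> {1..B})" by (rule card_image_le) auto
  also have "\<dots> = A * B" by simp
  finally have c: "real (card {z \<in> spec \<alpha>. z < y}) \<le> real A * real B" by (metis of_nat_le_iff of_nat_mult)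
  have r0: "0 \<le> sqrt (y/\<alpha>)" using a y by simp
  have "real A = of_int \<lfloor>sqrt (y/\<alpha>)\<rfloor>" unfolding A_def using r0 by simp
  hence "real A \<le> sqrt (y/\<alpha>)" by simp
  moreover have "real B = of_int \<lfloor>sqrt y\<rfloor>" unfolding B_def using y by simp
  hence "real B \<le> sqrt y" by simp
  ultimately have "real A * real B \<le> sqrt (y/\<alpha>) * sqrt y" using r0 by (intro mult_mono) auto
  also have "\<dots> = y / sqrt \<alpha>" using a y by (simp add: real_sqrt_divide real_sqrt_mult_self)
  finally show ?thesis using c fin by simp
qed

lemma lam_eq:
  assumes a: "\<alpha> > 0" and x: "x \<in> spec \<alpha>"
  shows "lam \<alpha> (card {z \<in> spec \<alpha>. z < x} + 1) = x"
proof -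
  have key: "card {z \<in> spec \<alpha>. z < u} < card {z \<in> spec \<alpha>. z < v}"
    if "u \<in> spec \<alpha>" "v \<in> spec \<alpha>" "u < v" for u v
  proof (rule psubset_card_mono)
    have "v \<ge> 0" using that(2) a unfolding spec_def by auto
    then show "finite {z \<in> spec \<alpha>. z < v}" using count_below[OF a] by blast
    show "{z \<in> spec \<alpha>. z < u} \<subset> {z \<in> spec \<alpha>. z < v}" using that by auto
  qed
  show ?thesis unfolding lam_def
  proof (rule the_equality)
    show "x \<in> spec \<alpha> \<and> card {y \<in> spec \<alpha>. y < x} = card {z \<in> spec \<alpha>. z < x} + 1 - 1" using x by simp
    fix x' assume "x' \<in> spec \<alpha> \<and> card {y \<in> spec \<alpha>. y < x'} = card {z \<in> spec \<alpha>. z < x} + 1 - 1"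
    hence x': "x' \<in> spec \<alpha>" and eq: "card {y \<in> spec \<alpha>. y < x'} = card {z \<in> spec \<alpha>. z < x}" by simp_all
    have "\<not> x < x'" using key[of x x'] eq x x' by auto
    moreover have "\<not> x' < x" using key[of x' x] eq x x' by auto
    ultimately show "x' = x" by linarith
  qed
qed

lemma spec_nonneg: "\<alpha> > 0 \<Longrightarrow> x \<in> spec \<alpha> \<Longrightarrow> x \<ge> 0"
  unfolding spec_def by auto

lemma delta_le:
  assumes "2 \<le> N" "1 \<le> i" "i < N"
  shows "delta_min \<alpha> N \<le> lam \<alpha> (i + 1) - lam \<alpha> i"
proof -
  have fin: "finite {lam \<alpha> (i + 1) - lam \<alpha> i | i. 1 \<le> i \<and> i < N}"
    by (rule finite_image_set) simp
  show ?thesis unfolding delta_min_def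
    by (rule Min_le[OF fin]) (use assms in blast)
qed

lemma gap:
  assumes a: "\<alpha> > 0" and x: "x \<in> spec \<alpha>" and y: "y \<in> spec \<alpha>" and xy: "x < y"
    and N: "card {z \<in> spec \<alpha>. z < y} + 1 \<le> N"
  shows "delta_min \<alpha> N \<le> y - x"
proof -
  define T where "T = {z \<in> spec \<alpha>. x < z \<and> z \<le> y}"
  have "T \<subseteq> {z \<in> spec \<alpha>. z < y + 1}" unfolding T_def by auto
  moreover have "finite {z \<in> spec \<alpha>. z < y + 1}" using count_below[OF a, of "y+1"] spec_nonneg[OF a y] by simp
  ultimately have finT: "finite T" by (rule finite_subset)
  have "y \<in> T" unfolding T_def using y xy by simp
  hence neT: "T \<noteq> {}" by blast
  define s where "s = Min T"
  have sT: "s \<in> T" unfolding s_def using finT neT by (rule Min_in)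
  hence sS: "s \<in> spec \<alpha>" and xs: "x < s" and sy: "s \<le> y" unfolding T_def by auto
  have below_s: "{z \<in> spec \<alpha>. z < s} = insert x {z \<in> spec \<alpha>. z < x}"
  proof (rule set_eqI, rule iffI)
    fix z assume z: "z \<in> {z \<in> spec \<alpha>. z < s}"
    show "z \<in> insert x {z \<in> spec \<alpha>. z < x}"
    proof (rule ccontr)
      assume "z \<notin> insert x {z \<in> spec \<alpha>. z < x}"
      hence "x < z" using z by auto
      hence "z \<in> T" using z sy unfolding T_def by auto
      hence "s \<le> z" unfolding s_def using finT by simp
      thus False using z by simp
    qed
  next
    fix z assume "z \<in> insert x {z \<in> spec \<alpha>. z < x}"
    thus "z \<in> {z \<in> spec \<alpha>. z < s}" using x xs by auto
  qed
  have finx: "finite {z \<in> spec \<alpha>. z < x}" using count_below[OF a spec_nonneg[OF a x]] by simp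
  define i where "i = card {z \<in> spec \<alpha>. z < x} + 1"
  have cs: "card {z \<in> spec \<alpha>. z < s} = i" unfolding below_s i_def using finx by simp
  have lx: "lam \<alpha> i = x" unfolding i_def by (rule lam_eq[OF a x])
  have ls: "lam \<alpha> (i + 1) = s" using lam_eq[OF a sS] cs by simp
  have "card {z \<in> spec \<alpha>. z < s} \<le> card {z \<in> spec \<alpha>. z < y}"
    by (rule card_mono) (use count_below[OF a spec_nonneg[OF a y]] sy in auto)
  hence "i < N" using cs N by simp
  moreover have "1 \<le> i" unfolding i_def by simp
  ultimately have "delta_min \<alpha> N \<le> lam \<alpha> (i + 1) - lam \<alpha> i"
    by (intro delta_le) auto
  thus ?thesis using lx ls sy by simp
qed

lemma core:
  assumes a: "\<alpha> > 0" and irr: "\<alpha> \<notin> \<rat>" and Q: "Q > 0" and aQ: "\<alpha> * real Q \<ge> 1"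
    and NQ: "(9*\<alpha> + (2*\<alpha>+3)^2) * (real Q)^2 / sqrt \<alpha> \<le> real N - 1"
  shows "delta_min \<alpha> N \<le> 8 / real Q"
proof -
  define c where "c = 9*\<alpha> + (2*\<alpha>+3)^2"
  obtain h k where k0: "0 < k" and kQ: "k \<le> int Q" and hk: "\<bar>of_int k * \<alpha> - of_int h\<bar> < 1/Q"
    using Dirichlet_approx[OF Q] by blast
  define a' where "a' = real_of_int k"
  define b where "b = real_of_int h"
  have Q1: "real Q \<ge> 1" using Q by simp
  have a1: "a' \<ge> 1" unfolding a'_def using k0 by simp
  have aQ': "a' \<le> real Q" unfolding a'_def using kQ by (metis of_int_le_iff of_int_of_nat_eq)
  have hk': "\<bar>a' * \<alpha> - b\<bar> < 1 / real Q" using hk unfolding a'_def b_def by simp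
  have "1 / real Q \<le> \<alpha>" using aQ Q by (simp add: field_simps)
  moreover have "a' * \<alpha> \<ge> \<alpha>" using a1 a by simp
  ultimately have "b > 0" using hk' by linarith
  hence h1: "h \<ge> 1" unfolding b_def by simp
  hence b1: "b \<ge> 1" unfolding b_def by simp
  have "1 / real Q \<le> 1" using Q1 by simp
  moreover have "a' * \<alpha> \<le> real Q * \<alpha>" using aQ' a by (simp add: mult_right_mono)
  moreover have "b < a' * \<alpha> + 1 / real Q" using hk' by (simp add: abs_less_iff)
  ultimately have bQ: "b \<le> real Q * \<alpha> + 1" by linarith
  have ne: "a' * \<alpha> - b \<noteq> 0"
  proof
    assume "a' * \<alpha> - b = 0"
    hence "\<alpha> = b / a'" using a1 by (simp add: field_simps)
    hence "\<alpha> \<in> \<rat>" unfolding a'_def b_def by simp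
    thus False using irr by simp
  qed
  define k' where "k' = nat k"
  define h' where "h' = nat h"
  have ka: "real k' = a'" unfolding k'_def a'_def using k0 by simp
  have hb: "real h' = b" unfolding h'_def b_def using h1 by simp
  have k'1: "k' \<ge> 1" "h' \<ge> 1" using k0 h1 unfolding k'_def h'_def by auto
  define x1 where "x1 = \<alpha> * (2*a'-1)^2 + (2*b+1)^2"
  define x2 where "x2 = \<alpha> * (2*a'+1)^2 + (2*b-1)^2"
  have x1S: "x1 \<in> spec \<alpha>"
  proof -
    have "\<alpha> * (real (2*k'-1))^2 + (real (2*h'+1))^2 \<in> spec \<alpha>" by (rule spec_intro) (use k'1 in auto)
    moreover have "real (2*k'-1) = 2*a'-1" using k'1 ka by (simp add: of_nat_diff)
    moreover have "real (2*h'+1) = 2*b+1" using hb by simp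
    ultimately show ?thesis unfolding x1_def by (simp add: add.commute)
  qed
  have x2S: "x2 \<in> spec \<alpha>"
  proof -
    have "\<alpha> * (real (2*k'+1))^2 + (real (2*h'-1))^2 \<in> spec \<alpha>" by (rule spec_intro) (use k'1 in auto)
    moreover have "real (2*h'-1) = 2*b-1" using k'1 hb by (simp add: of_nat_diff)
    moreover have "real (2*k'+1) = 2*a'+1" using ka by simp
    ultimately show ?thesis unfolding x2_def by (simp add: add.commute)
  qed
  have diff: "x2 - x1 = 8 * (a' * \<alpha> - b)" unfolding x1_def x2_def by (simp add: algebra_simps power2_eq_square)
  have bnd: "x \<le> c * (real Q)^2" if "x = x1 \<or> x = x2" for x
  proof -
    have A: "(2*a'+1)^2 \<le> 9 * (real Q)^2"
    proof -
      have "2*a'+1 \<le> 3 * real Q" using aQ' Q1 by simp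
      hence "(2*a'+1)^2 \<le> (3 * real Q)^2" by (rule power_mono) (use a1 in simp)
      thus ?thesis by (simp add: power_mult_distrib)
    qed
    have A': "(2*a'-1)^2 \<le> (2*a'+1)^2" using a1 by (intro power_mono) auto
    have B: "(2*b+1)^2 \<le> (2*\<alpha>+3)^2 * (real Q)^2"
    proof -
      have "(2*\<alpha>+3) * real Q = 2*(real Q * \<alpha>) + 3 * real Q" by (simp add: algebra_simps)
      hence "2*b+1 \<le> (2*\<alpha>+3) * real Q" using bQ Q1 by linarith
      hence "(2*b+1)^2 \<le> ((2*\<alpha>+3) * real Q)^2" by (rule power_mono) (use b1 in simp)
      thus ?thesis by (simp add: power_mult_distrib)
    qed
    have B': "(2*b-1)^2 \<le> (2*b+1)^2" using b1 by (intro power_mono) auto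
    have A'': "\<alpha> * (2*a'-1)^2 \<le> \<alpha> * (2*a'+1)^2" using A' a by (simp add: mult_left_mono)
    have "x \<le> \<alpha> * (2*a'+1)^2 + (2*b+1)^2"
      using that A'' B' unfolding x1_def x2_def by auto
    also have "\<dots> \<le> \<alpha> * (9 * (real Q)^2) + (2*\<alpha>+3)^2 * (real Q)^2"
    proof -
      have "\<alpha> * (2*a'+1)^2 \<le> \<alpha> * (9 * (real Q)^2)" using A a by (simp add: mult_left_mono)
      thus ?thesis using B by linarith
    qed
    also have "\<dots> = c * (real Q)^2" unfolding c_def by (simp add: algebra_simps)
    finally show ?thesis .
  qed
  have fin: "delta_min \<alpha> N \<le> y - x" if "x \<in> spec \<alpha>" "y \<in> spec \<alpha>" "x < y" "y \<le> c * (real Q)^2" for x y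
  proof (rule gap[OF a that(1-3)])
    have "real (card {z \<in> spec \<alpha>. z < y}) \<le> y / sqrt \<alpha>"
      using count_below[OF a spec_nonneg[OF a that(2)]] by simp
    also have "\<dots> \<le> c * (real Q)^2 / sqrt \<alpha>" using that(4) a by (simp add: divide_right_mono)
    also have "\<dots> \<le> real N - 1" using NQ unfolding c_def .
    finally show "card {z \<in> spec \<alpha>. z < y} + 1 \<le> N" by linarith
  qed
  show ?thesis
  proof (cases "a' * \<alpha> - b > 0")
    case True
    hence "delta_min \<alpha> N \<le> x2 - x1" using fin[OF x1S x2S] diff bnd by simp
    thus ?thesis using diff hk' by simp
  next
    case False
    hence "a' * \<alpha> - b < 0" using ne by simp
    hence "delta_min \<alpha> N \<le> x1 - x2" using fin[OF x2S x1S] diff bnd by simp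
    thus ?thesis using diff hk' by simp
  qed
qed

lemma powr_half: "N > 0 \<Longrightarrow> real N powr (-1/2) = 1 / sqrt (real N)"
  by (simp add: powr_minus_divide powr_half_sqrt[symmetric])

theorem proposition2p2:
  fixes \<alpha> :: real
  assumes "\<alpha> > 0" and "\<alpha> \<notin> \<rat>"
  shows "\<exists>C > 0. \<forall>N :: nat. N \<ge> 2 \<longrightarrow> delta_min \<alpha> N \<le> C * (real N) powr (-1/2)"
proof -
  note a = assms(1)
  define c where "c = 9*\<alpha> + (2*\<alpha>+3)^2"
  have "(2*\<alpha>+3)^2 \<ge> 0" by simp
  hence c0: "c > 0" unfolding c_def using a by linarith
  define t where "t = sqrt \<alpha> / (2*c)"
  have t0: "t > 0" unfolding t_def using a c0 by simp
  define D where "D = lam \<alpha> 2 - lam \<alpha> 1"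
  define N1 where "N1 = nat \<lceil>4/t + 4/(\<alpha>^2 * t)\<rceil>"
  define C where "C = max (16 / sqrt t) ((\<bar>D\<bar>+1) * sqrt (real N1))"
  have "16 / sqrt t > 0" using t0 by simp
  hence C0: "C > 0" unfolding C_def by (simp add: less_max_iff_disj)
  show ?thesis
  proof (intro exI[of _ C] conjI allI impI)
    show "C > 0" by (rule C0)
    fix N :: nat assume N2: "N \<ge> 2"
    have Np: "real N > 0" using N2 by simp
    have pw: "C * real N powr (-1/2) = C / sqrt (real N)" using powr_half[of N] N2 by simp
    show "delta_min \<alpha> N \<le> C * real N powr (-1/2)"
    proof (cases "N < N1")
      case True
      have "delta_min \<alpha> N \<le> D" unfolding D_def using delta_le[OF N2, of 1 \<alpha>] N2 by (simp add: numeral_2_eq_2)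
      also have "\<dots> \<le> (\<bar>D\<bar>+1) * sqrt (real N1) / sqrt (real N1)" using True by simp
      also have "\<dots> \<le> C / sqrt (real N1)"
      proof -
        have "(\<bar>D\<bar>+1) * sqrt (real N1) \<le> C" unfolding C_def by simp
        thus ?thesis by (rule divide_right_mono) simp
      qed
      also have "\<dots> \<le> C / sqrt (real N)" using True C0 Np by (intro divide_left_mono) auto
      finally show ?thesis using pw by simp
    next
      case False
      define s where "s = sqrt (t * real N)"
      have ge: "real N \<ge> 4/t + 4/(\<alpha>^2 * t)" using False unfolding N1_def
        using nat_ceiling_le_eq not_less by blast
      have p1: "4/t \<ge> 0" "4/(\<alpha>^2 * t) \<ge> 0" using t0 a by auto
      have "4/t \<le> real N" "4/(\<alpha>^2 * t) \<le> real N" using ge p1 by linarith+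
      note le = this
      have tN1: "t * real N \<ge> 4" using le(1) t0 by (simp add: pos_divide_le_eq mult.commute)
      have a2: "\<alpha>^2 > 0" using a by simp
      have "4 \<le> real N * (\<alpha>^2 * t)" using le(2) a2 t0 by (simp add: pos_divide_le_eq)
      hence "4 \<le> (t * real N) * \<alpha>^2" by (simp add: algebra_simps)
      hence "4 / \<alpha>^2 \<le> t * real N" using a2 by (simp add: pos_divide_le_eq)
      hence tN2: "t * real N \<ge> (2/\<alpha>)^2" by (simp add: power_divide)
      have s0: "s \<ge> 0" unfolding s_def using t0 Np by simp
      have ss: "s^2 = t * real N" unfolding s_def using t0 Np by simp
      have "2^2 \<le> s^2" using tN1 ss by simp
      hence s2: "s \<ge> 2" using power2_le_imp_le s0 by blast
      have "(2/\<alpha>)^2 \<le> s^2" using tN2 ss by simp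
      hence sa: "s \<ge> 2/\<alpha>" using power2_le_imp_le s0 by blast
      define Q where "Q = nat \<lfloor>s\<rfloor>"
      have RQ: "real Q = real_of_int \<lfloor>s\<rfloor>" unfolding Q_def using s0 by simp
      have Qs: "real Q \<le> s" "real Q > s - 1"
        using RQ of_int_floor_le[of s] real_of_int_floor_gt_diff_one[of s] by linarith+
      have Qh: "real Q \<ge> s/2" using Qs s2 by linarith
      have Q0: "Q > 0" using Qh s2 by (metis of_nat_0 not_gr0 divide_le_0_iff not_le zero_less_numeral less_le_trans)
      have aQ: "\<alpha> * real Q \<ge> 1"
      proof -
        have "\<alpha> * real Q \<ge> \<alpha> * (s/2)" using Qh a by (simp add: mult_left_mono)
        moreover have "\<alpha> * (2/\<alpha>) = 2" using a by simp
        moreover have "\<alpha> * (2/\<alpha>) \<le> \<alpha> * s" using mult_left_mono[OF sa, of \<alpha>] a by simp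
        ultimately show ?thesis by linarith
      qed
      have Q2: "(real Q)^2 \<le> t * real N" using Qs ss by (metis power_mono of_nat_0_le_iff)
      have "c * (real Q)^2 \<le> c * (t * real N)" using Q2 c0 by (simp add: mult_left_mono)
      hence "c * (real Q)^2 / sqrt \<alpha> \<le> c * (t * real N) / sqrt \<alpha>"
        using a by (simp add: divide_right_mono)
      also have "c * (t * real N) / sqrt \<alpha> = real N / 2"
      proof -
        have "sqrt \<alpha> > 0" using a by simp
        thus ?thesis unfolding t_def using c0 by (simp add: field_simps)
      qed
      also have "\<dots> \<le> real N - 1" using N2 by simp
      finally have NQ: "c * (real Q)^2 / sqrt \<alpha> \<le> real N - 1" .
      have "delta_min \<alpha> N \<le> 8 / real Q" using core[OF a assms(2) Q0 aQ] NQ unfolding c_def by blast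
      also have "\<dots> \<le> 8 / (s/2)" using Qh s2 by (intro divide_left_mono) auto
      also have "8 / (s/2) = (16 / sqrt t) / sqrt (real N)"
      proof -
        have "s = sqrt t * sqrt (real N)" unfolding s_def by (simp add: real_sqrt_mult)
        thus ?thesis by simp
      qed
      also have "\<dots> \<le> C / sqrt (real N)"
      proof -
        have "16 / sqrt t \<le> C" unfolding C_def by simp
        thus ?thesis by (rule divide_right_mono) simp
      qed
      finally show ?thesis using pw by simp
    qed
  qed
qed

end
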